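(* There exist nonatomic routing games with affine cost functions (i.e., $c_e(x)=t_e+a_ex$ with $t_e,a_e\in\mathbb{R}_+$) that do not admit a non-negative demand-independent optimal toll (DIOT).
   Context: A nonatomic routing game consists of a finite directed multigraph $\mathcal{G}=(\mathcal{V},\mathcal{E})$, a finite set $\mathcal{I}$ of origin-destination pairs $i$ with origin $o^i$ and destination $d^i$, and nondecreasing continuous cost functions $c_e:\mathbb{R}_+\to\mathbb{R}_+$. $\mathcal{P}^i$ is the set of simple $o^i$–$d^i$ paths. For a demand vector $\boldsymbol{\mu}\in\mathbb{R}_+^{\mathcal{I}}$, feasible flows are $\boldsymbol{f}\in\mathbb{R}_+^{\mathcal{P}}$ with $\sum_{p\in\mathcal{P}^i}f_p=\mu^i$; loads $x_e=\sum_{p\ni e}f_p$; path costs $c_p=\sum_{e\in p}c_e(x_e)$. A Wardrop equilibrium is a feasible flow where every used path of each pair $i$ has cost at most that of any other path in $\mathcal{P}^i$. The total cost is $L(\boldsymbol{f})=\sum_p f_pc_p(\boldsymbol{f})$; a system optimum minimizes $L$ over feasible flows. For a toll vector $\boldsymbol{\tau}\in\mathbb{R}^{\mathcal{E}}$, the tolled game has edge costs $c_e(x)+\tau_e$. $\boldsymbol{\tau}$ is a DIOT if for every demand vector $\boldsymbol{\mu}\in\mathbb{R}_+^{\mathcal{I}}$ every Wardrop equilibrium of the tolled game with demand $\boldsymbol{\mu}$ is a system optimum of the untolled game for demand $\boldsymbol{\mu}$. It is non-negative if $\tau_e\ge0$ for all $e$. *)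

theory Defs
  imports "HOL-Analysis.Analysis"
begin

text \<open>Vertices and edges are
represented by natural numbers; an edge e has tail src e and head tgt e, and the
edge set is a finite set E. OD pairs are a finite index set I of naturals, with
origins orig i and destinations dest i. Paths are lists of edges.\<close>

fun is_walk :: "nat set \<Rightarrow> (nat \<Rightarrow> nat) \<Rightarrow> (nat \<Rightarrow> nat) \<Rightarrow> nat \<Rightarrow> nat list \<Rightarrow> nat \<Rightarrow> bool" where
  "is_walk E src tgt u [] v = (u = v)"
| "is_walk E src tgt u (e # es) v = (e \<in> E \<and> src e = u \<and> is_walk E src tgt (tgt e) es v)"

fun walk_verts :: "(nat \<Rightarrow> nat) \<Rightarrow> nat \<Rightarrow> nat list \<Rightarrow> nat list" where
  "walk_verts tgt u [] = [u]"
| "walk_verts tgt u (e # es) = u # walk_verts tgt (tgt e) es"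

definition simple_path :: "nat set \<Rightarrow> (nat \<Rightarrow> nat) \<Rightarrow> (nat \<Rightarrow> nat) \<Rightarrow> nat \<Rightarrow> nat list \<Rightarrow> nat \<Rightarrow> bool" where
  "simple_path E src tgt u p v \<longleftrightarrow> is_walk E src tgt u p v \<and> distinct (walk_verts tgt u p)"

definition paths :: "nat set \<Rightarrow> (nat \<Rightarrow> nat) \<Rightarrow> (nat \<Rightarrow> nat) \<Rightarrow> (nat \<Rightarrow> nat) \<Rightarrow> (nat \<Rightarrow> nat) \<Rightarrow> nat \<Rightarrow> nat list set" where
  "paths E src tgt orig dest i = {p. simple_path E src tgt (orig i) p (dest i)}"

definition feasible :: "nat set \<Rightarrow> (nat \<Rightarrow> nat) \<Rightarrow> (nat \<Rightarrow> nat) \<Rightarrow> nat set \<Rightarrow> (nat \<Rightarrow> nat) \<Rightarrow> (nat \<Rightarrow> nat)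
    \<Rightarrow> (nat \<Rightarrow> real) \<Rightarrow> (nat \<Rightarrow> nat list \<Rightarrow> real) \<Rightarrow> bool" where
  "feasible E src tgt I orig dest \<mu> f \<longleftrightarrow>
     (\<forall>i\<in>I. (\<forall>p\<in>paths E src tgt orig dest i. 0 \<le> f i p)
          \<and> (\<Sum>p\<in>paths E src tgt orig dest i. f i p) = \<mu> i)"

definition load :: "nat set \<Rightarrow> (nat \<Rightarrow> nat) \<Rightarrow> (nat \<Rightarrow> nat) \<Rightarrow> nat set \<Rightarrow> (nat \<Rightarrow> nat) \<Rightarrow> (nat \<Rightarrow> nat)
    \<Rightarrow> (nat \<Rightarrow> nat list \<Rightarrow> real) \<Rightarrow> nat \<Rightarrow> real" where
  "load E src tgt I orig dest f e =
     (\<Sum>i\<in>I. \<Sum>p\<in>{p \<in> paths E src tgt orig dest i. e \<in> set p}. f i p)"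

definition path_cost :: "nat set \<Rightarrow> (nat \<Rightarrow> nat) \<Rightarrow> (nat \<Rightarrow> nat) \<Rightarrow> nat set \<Rightarrow> (nat \<Rightarrow> nat) \<Rightarrow> (nat \<Rightarrow> nat)
    \<Rightarrow> (nat \<Rightarrow> real \<Rightarrow> real) \<Rightarrow> (nat \<Rightarrow> nat list \<Rightarrow> real) \<Rightarrow> nat list \<Rightarrow> real" where
  "path_cost E src tgt I orig dest c f p =
     sum_list (map (\<lambda>e. c e (load E src tgt I orig dest f e)) p)"

definition wardrop :: "nat set \<Rightarrow> (nat \<Rightarrow> nat) \<Rightarrow> (nat \<Rightarrow> nat) \<Rightarrow> nat set \<Rightarrow> (nat \<Rightarrow> nat) \<Rightarrow> (nat \<Rightarrow> nat)
    \<Rightarrow> (nat \<Rightarrow> real \<Rightarrow> real) \<Rightarrow> (nat \<Rightarrow> real) \<Rightarrow> (nat \<Rightarrow> nat list \<Rightarrow> real) \<Rightarrow> bool" where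
  "wardrop E src tgt I orig dest c \<mu> f \<longleftrightarrow>
     feasible E src tgt I orig dest \<mu> f \<and>
     (\<forall>i\<in>I. \<forall>p\<in>paths E src tgt orig dest i. 0 < f i p \<longrightarrow>
        (\<forall>q\<in>paths E src tgt orig dest i.
           path_cost E src tgt I orig dest c f p \<le> path_cost E src tgt I orig dest c f q))"

definition total_cost :: "nat set \<Rightarrow> (nat \<Rightarrow> nat) \<Rightarrow> (nat \<Rightarrow> nat) \<Rightarrow> nat set \<Rightarrow> (nat \<Rightarrow> nat) \<Rightarrow> (nat \<Rightarrow> nat)
    \<Rightarrow> (nat \<Rightarrow> real \<Rightarrow> real) \<Rightarrow> (nat \<Rightarrow> nat list \<Rightarrow> real) \<Rightarrow> real" where
  "total_cost E src tgt I orig dest c f =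
     (\<Sum>i\<in>I. \<Sum>p\<in>paths E src tgt orig dest i. f i p * path_cost E src tgt I orig dest c f p)"

definition system_optimum :: "nat set \<Rightarrow> (nat \<Rightarrow> nat) \<Rightarrow> (nat \<Rightarrow> nat) \<Rightarrow> nat set \<Rightarrow> (nat \<Rightarrow> nat) \<Rightarrow> (nat \<Rightarrow> nat)
    \<Rightarrow> (nat \<Rightarrow> real \<Rightarrow> real) \<Rightarrow> (nat \<Rightarrow> real) \<Rightarrow> (nat \<Rightarrow> nat list \<Rightarrow> real) \<Rightarrow> bool" where
  "system_optimum E src tgt I orig dest c \<mu> f \<longleftrightarrow>
     feasible E src tgt I orig dest \<mu> f \<and>
     (\<forall>g. feasible E src tgt I orig dest \<mu> g \<longrightarrow>
        total_cost E src tgt I orig dest c f \<le> total_cost E src tgt I orig dest c g)"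

definition is_DIOT :: "nat set \<Rightarrow> (nat \<Rightarrow> nat) \<Rightarrow> (nat \<Rightarrow> nat) \<Rightarrow> nat set \<Rightarrow> (nat \<Rightarrow> nat) \<Rightarrow> (nat \<Rightarrow> nat)
    \<Rightarrow> (nat \<Rightarrow> real \<Rightarrow> real) \<Rightarrow> (nat \<Rightarrow> real) \<Rightarrow> bool" where
  "is_DIOT E src tgt I orig dest c \<tau> \<longleftrightarrow>
     (\<forall>\<mu>. (\<forall>i\<in>I. 0 \<le> \<mu> i) \<longrightarrow>
        (\<forall>f. wardrop E src tgt I orig dest (\<lambda>e x. c e x + \<tau> e) \<mu> f \<longrightarrow>
             system_optimum E src tgt I orig dest c \<mu> f))"

definition affine_costs :: "nat set \<Rightarrow> (nat \<Rightarrow> real \<Rightarrow> real) \<Rightarrow> bool" where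
  "affine_costs E c \<longleftrightarrow>
     (\<exists>t a. \<forall>e\<in>E. 0 \<le> t e \<and> 0 \<le> a e \<and> (\<forall>x\<ge>0. c e x = t e + a e * x))"

end

theory Submission
  imports Defs
begin

definition "sE = {0,1,2,3::nat}"
definition "ssrc = (\<lambda>e::nat. if e = 2 then 2 else if e = 3 then 1 else (0::nat))"
definition "stgt = (\<lambda>e::nat. if e = 0 then 1 else if e = 2 then 1 else (2::nat))"
definition "sorig = (\<lambda>i::nat. 0::nat)"
definition "sdest = (\<lambda>i::nat. if i = 0 then 1 else (2::nat))"

lemma verts_sub: "is_walk sE ssrc stgt u p v \<Longrightarrow> u \<in> {0,1,2} \<Longrightarrow> set (walk_verts stgt u p) \<subseteq> {0,1,2}"
  by (induction p arbitrary: u) (auto simp: stgt_def)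

lemma len_bound: assumes "simple_path sE ssrc stgt u p v" "u \<in> {0,1,2}" shows "length p \<le> 2"
proof -
  have w: "is_walk sE ssrc stgt u p v" and d: "distinct (walk_verts stgt u p)" using assms unfolding simple_path_def by auto
  have l: "length (walk_verts stgt u p) = Suc (length p)" by (induction p arbitrary: u) auto
  have "card (set (walk_verts stgt u p)) \<le> card {0::nat,1,2}"
    by (rule card_mono) (use verts_sub[OF w assms(2)] in auto)
  hence "card (set (walk_verts stgt u p)) \<le> 3" by simp
  then show ?thesis using d l distinct_card by fastforce
qed

lemma list_cases2: "length (p::nat list) \<le> 2 \<Longrightarrow> p = [] \<or> (\<exists>a. p = [a]) \<or> (\<exists>a b. p = [a,b])"
  by (cases p; cases "tl p"; auto)

lemma paths0: "paths sE ssrc stgt sorig sdest 0 = {[0],[1,2]}"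
proof -
  have "p \<in> paths sE ssrc stgt sorig sdest 0 \<longleftrightarrow> p \<in> {[0],[1,2]}" for p
  proof
    assume "p \<in> paths sE ssrc stgt sorig sdest 0"
    hence sp: "simple_path sE ssrc stgt 0 p 1" by (simp add: paths_def sorig_def sdest_def)
    hence "length p \<le> 2" by (rule len_bound) simp
    then consider "p = []" | a where "p = [a]" | a b where "p = [a,b]" using list_cases2 by blast
    then show "p \<in> {[0],[1,2]}" using sp
      by cases (auto simp: simple_path_def sE_def ssrc_def stgt_def split: if_splits)
  qed (auto simp: paths_def sorig_def sdest_def simple_path_def sE_def ssrc_def stgt_def)
  thus ?thesis by blast
qed

lemma paths1: "i \<noteq> 0 \<Longrightarrow> paths sE ssrc stgt sorig sdest i = {[1],[0,3]}"
proof -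
  assume i: "i \<noteq> 0"
  have "p \<in> paths sE ssrc stgt sorig sdest i \<longleftrightarrow> p \<in> {[1],[0,3]}" for p
  proof
    assume "p \<in> paths sE ssrc stgt sorig sdest i"
    hence sp: "simple_path sE ssrc stgt 0 p 2" using i by (simp add: paths_def sorig_def sdest_def)
    hence "length p \<le> 2" by (rule len_bound) simp
    then consider "p = []" | a where "p = [a]" | a b where "p = [a,b]" using list_cases2 by blast
    then show "p \<in> {[1],[0,3]}" using sp
      by cases (auto simp: simple_path_def sE_def ssrc_def stgt_def split: if_splits)
  qed (use i in \<open>auto simp: paths_def sorig_def sdest_def simple_path_def sE_def ssrc_def stgt_def\<close>)
  thus ?thesis by blast
qed

abbreviation "sI \<equiv> {0,1::nat}"
definition "sc = (\<lambda>e::nat. \<lambda>x::real. if e \<le> 1 then x else 1)"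

lemma load_eq: "load sE ssrc stgt sI sorig sdest f e =
   (if e = 0 then f 0 [0] else 0) + (if e = 1 \<or> e = 2 then f 0 [1,2] else 0)
   + (if e = 1 then f 1 [1] else 0) + (if e = 0 \<or> e = 3 then f 1 [0,3] else 0)"
proof -
  have "load sE ssrc stgt sI sorig sdest f e =
     (\<Sum>p\<in>{[0::nat],[1,2]}. if e \<in> set p then f 0 p else 0) + (\<Sum>p\<in>{[1::nat],[0,3]}. if e \<in> set p then f 1 p else 0)"
  proof -
    have f0: "finite {[0::nat],[1,2]}" and f1: "finite {[1::nat],[0,3]}" by auto
    have "load sE ssrc stgt sI sorig sdest f e = sum (f 0) {p \<in> paths sE ssrc stgt sorig sdest 0. e \<in> set p}
        + sum (f 1) {p \<in> paths sE ssrc stgt sorig sdest 1. e \<in> set p}"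
      unfolding load_def by simp
    also have "\<dots> = sum (f 0) {p \<in> {[0::nat],[1,2]}. e \<in> set p} + sum (f 1) {p \<in> {[1::nat],[0,3]}. e \<in> set p}"
      unfolding paths0 paths1[OF one_neq_zero] ..
    also have "\<dots> = (\<Sum>p\<in>{[0::nat],[1,2]}. if e \<in> set p then f 0 p else 0) + (\<Sum>p\<in>{[1::nat],[0,3]}. if e \<in> set p then f 1 p else 0)"
      unfolding sum.inter_filter[OF f0] sum.inter_filter[OF f1] ..
    finally show ?thesis .
  qed
  also have "\<dots> = (if e \<in> set [0] then f 0 [0] else 0) + (if e \<in> set [1,2] then f 0 [1,2] else 0)
     + ((if e \<in> set [1] then f 1 [1] else 0) + (if e \<in> set [0,3] then f 1 [0,3] else 0))"
    by simp
  finally show ?thesis by simp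
qed

lemma total_eq: "total_cost sE ssrc stgt sI sorig sdest c f =
   f 0 [0] * path_cost sE ssrc stgt sI sorig sdest c f [0]
 + f 0 [1,2] * path_cost sE ssrc stgt sI sorig sdest c f [1,2]
 + (f 1 [1] * path_cost sE ssrc stgt sI sorig sdest c f [1]
 + f 1 [0,3] * path_cost sE ssrc stgt sI sorig sdest c f [0,3])"
  unfolding total_cost_def by (simp add: paths0 paths1)

lemma pc_eq: "path_cost sE ssrc stgt sI sorig sdest c f p = sum_list (map (\<lambda>e. c e (load sE ssrc stgt sI sorig sdest f e)) p)"
  by (simp add: path_cost_def)

lemma feas_eq: "feasible sE ssrc stgt sI sorig sdest \<mu> f \<longleftrightarrow>
   0 \<le> f 0 [0] \<and> 0 \<le> f 0 [1,2] \<and> f 0 [0] + f 0 [1,2] = \<mu> 0 \<and>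
   0 \<le> f 1 [1] \<and> 0 \<le> f 1 [0,3] \<and> f 1 [1] + f 1 [0,3] = \<mu> 1"
  unfolding feasible_def by (simp add: paths0 paths1)

lemma wardrop_eq: "wardrop sE ssrc stgt sI sorig sdest c \<mu> f \<longleftrightarrow>
   feasible sE ssrc stgt sI sorig sdest \<mu> f \<and>
   (\<forall>p\<in>{[0],[1,2]}. 0 < f 0 p \<longrightarrow> (\<forall>q\<in>{[0],[1,2]}. path_cost sE ssrc stgt sI sorig sdest c f p \<le> path_cost sE ssrc stgt sI sorig sdest c f q)) \<and>
   (\<forall>p\<in>{[1],[0,3]}. 0 < f 1 p \<longrightarrow> (\<forall>q\<in>{[1],[0,3]}. path_cost sE ssrc stgt sI sorig sdest c f p \<le> path_cost sE ssrc stgt sI sorig sdest c f q))"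
  unfolding wardrop_def by (simp add: paths0 paths1)

theorem proposition8:
  shows "\<exists>(E::nat set) (src::nat \<Rightarrow> nat) (tgt::nat \<Rightarrow> nat) (I::nat set) (orig::nat \<Rightarrow> nat)
            (dest::nat \<Rightarrow> nat) (c::nat \<Rightarrow> real \<Rightarrow> real).
           finite E \<and> finite I \<and> affine_costs E c \<and>
           \<not> (\<exists>\<tau>::nat \<Rightarrow> real. (\<forall>e\<in>E. 0 \<le> \<tau> e) \<and> is_DIOT E src tgt I orig dest c \<tau>)"
proof (intro exI conjI)
  show "finite sE" by (simp add: sE_def)
  show "finite sI" by simp
  show "affine_costs sE sc" unfolding affine_costs_def sc_def
    by (rule exI[of _ "\<lambda>e. if e \<le> 1 then 0 else 1"], rule exI[of _ "\<lambda>e. if e \<le> 1 then 1 else 0"]) auto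
  show "\<not> (\<exists>\<tau>. (\<forall>e\<in>sE. 0 \<le> \<tau> e) \<and> is_DIOT sE ssrc stgt sI sorig sdest sc \<tau>)"
  proof
    assume "\<exists>\<tau>. (\<forall>e\<in>sE. 0 \<le> \<tau> e) \<and> is_DIOT sE ssrc stgt sI sorig sdest sc \<tau>"
    then obtain \<tau> where nn: "\<forall>e\<in>sE. 0 \<le> \<tau> e" and D: "is_DIOT sE ssrc stgt sI sorig sdest sc \<tau>" by blast
    have t2: "0 \<le> \<tau> 2" and t3: "0 \<le> \<tau> 3" using nn by (auto simp: sE_def)
    show False
    proof (cases "0 \<le> \<tau> 1 + \<tau> 2 - \<tau> 0")
      case True
      define \<mu> where "\<mu> = (\<lambda>i::nat. if i = 0 then 1 else (0::real))"
      define f where "f = (\<lambda>i::nat. \<lambda>p::nat list. if i = 0 \<and> p = [0] then 1 else (0::real))"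
      define g where "g = (\<lambda>i::nat. \<lambda>p::nat list. if i = 0 then (if p = [0] then 3/4 else if p = [1,2] then 1/4 else 0) else (0::real))"
      have W: "wardrop sE ssrc stgt sI sorig sdest (\<lambda>e x. sc e x + \<tau> e) \<mu> f"
        unfolding wardrop_eq feas_eq pc_eq load_eq using True by (auto simp: f_def \<mu>_def sc_def)
      have "system_optimum sE ssrc stgt sI sorig sdest sc \<mu> f"
        using D W unfolding is_DIOT_def by (auto simp: \<mu>_def)
      moreover have "feasible sE ssrc stgt sI sorig sdest \<mu> g" unfolding feas_eq by (simp add: g_def \<mu>_def)
      ultimately have "total_cost sE ssrc stgt sI sorig sdest sc f \<le> total_cost sE ssrc stgt sI sorig sdest sc g"
        unfolding system_optimum_def by blast
      then show False unfolding total_eq pc_eq load_eq by (simp add: f_def g_def sc_def)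
    next
      case False
      hence True': "0 \<le> \<tau> 0 + \<tau> 3 - \<tau> 1" using t2 t3 by linarith
      define \<mu> where "\<mu> = (\<lambda>i::nat. if i = 0 then 0 else (1::real))"
      define f where "f = (\<lambda>i::nat. \<lambda>p::nat list. if i \<noteq> 0 \<and> p = [1] then 1 else (0::real))"
      define g where "g = (\<lambda>i::nat. \<lambda>p::nat list. if i \<noteq> 0 then (if p = [1] then 3/4 else if p = [0,3] then 1/4 else 0) else (0::real))"
      have W: "wardrop sE ssrc stgt sI sorig sdest (\<lambda>e x. sc e x + \<tau> e) \<mu> f"
        unfolding wardrop_eq feas_eq pc_eq load_eq using True' by (auto simp: f_def \<mu>_def sc_def)
      have "system_optimum sE ssrc stgt sI sorig sdest sc \<mu> f"
        using D W unfolding is_DIOT_def by (auto simp: \<mu>_def)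
      moreover have "feasible sE ssrc stgt sI sorig sdest \<mu> g" unfolding feas_eq by (simp add: g_def \<mu>_def)
      ultimately have "total_cost sE ssrc stgt sI sorig sdest sc f \<le> total_cost sE ssrc stgt sI sorig sdest sc g"
        unfolding system_optimum_def by blast
      then show False unfolding total_eq pc_eq load_eq by (simp add: f_def g_def sc_def)
    qed
  qed
qed

end
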